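(* Let $N\in\mathbb N$, $w_1,\dots,w_N\in\mathbb R^m$, $\omega(z)=\max_{i=1,\dots,N}\langle w_i,z\rangle$ for $z\in\mathbb R^m$, and $A\in\mathbb R^{m\times n}$. For $\lambda>0$ and $y\in\mathbb R^n$ let $h_\lambda(u)=\frac1{2\lambda}\|\lambda u-y\|^2-\frac1{2\lambda}\|y\|^2$ ($u\in\mathbb R^n$) and $\Psi_\lambda(v)=h_\lambda(A^\top v)+\omega^\star(v)$ ($v\in\mathbb R^m$). Then: (i) $\omega$ is globally $K_\omega$-Lipschitz continuous with $K_\omega=\max_{i}\|w_i\|$, and $\operatorname{dom}\omega^\star$ is bounded; (ii) there is a constant $\theta>0$ (a Hoffman constant depending only on $A^\top$ and the polytope $\operatorname{conv}\{w_1,\dots,w_N\}$, not on $\lambda$ or $y$) such that for every $\lambda>0$ and $y\in\mathbb R^n$: $v\mapsto h_\lambda(A^\top v)$ is convex and $\lambda\|A^\top A\|$-Lipschitz smooth, $\Psi_\lambda$ has a nonempty set $S$ of minimizers, and $\Psi_\lambda$ satisfies quadratic growth with constant $\kappa_\lambda=\lambda/\theta^2$; (iii) if $\lambda\ge\lambda_{\min}>0$, then $\kappa_\lambda\ge\lambda_{\min}/\theta^2$.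
   Context: $\omega^\star$ is the Fenchel conjugate of $\omega$. A proper closed convex $\Psi$ with nonempty minimizer set $S$ satisfies quadratic growth with constant $\kappa>0$ if $\Psi(v)\ge\min\Psi+\frac\kappa2\operatorname{dist}(v|S)^2$ for all $v$. A convex differentiable function $\phi$ is $\ell$-Lipschitz smooth if $\phi(u)-\phi(w)-\langle\nabla\phi(w),u-w\rangle\le\frac\ell2\|u-w\|^2$ for all $u,w$. *)

theory Defs
  imports "HOL-Analysis.Analysis"
begin

definition fenchel_conj :: "('a::real_inner \<Rightarrow> real) \<Rightarrow> 'a \<Rightarrow> ereal" where
  "fenchel_conj f v = (SUP z. ereal (v \<bullet> z - f z))"

definition edom :: "('a \<Rightarrow> ereal) \<Rightarrow> 'a set" where
  "edom g = {v. g v < \<infinity>}"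

definition minimizers :: "('a \<Rightarrow> ereal) \<Rightarrow> 'a set" where
  "minimizers g = {v. \<forall>u. g v \<le> g u}"

definition quadratic_growth :: "('a::metric_space \<Rightarrow> ereal) \<Rightarrow> real \<Rightarrow> bool" where
  "quadratic_growth g \<kappa> \<longleftrightarrow>
     minimizers g \<noteq> {} \<and>
     (\<forall>s\<in>minimizers g. \<bar>g s\<bar> \<noteq> \<infinity> \<and>
        (\<forall>v. g s + ereal (\<kappa> / 2 * (infdist v (minimizers g))\<^sup>2) \<le> g v))"

definition lipschitz_smooth :: "('a::real_inner \<Rightarrow> real) \<Rightarrow> real \<Rightarrow> bool" where
  "lipschitz_smooth \<phi> l \<longleftrightarrow>
     (\<exists>g. (\<forall>w. (\<phi> has_derivative (\<lambda>h. g w \<bullet> h)) (at w)) \<and>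
          (\<forall>u w. \<phi> u - \<phi> w - g w \<bullet> (u - w) \<le> l / 2 * (norm (u - w))\<^sup>2))"

end

theory Submission
  imports Defs
begin

definition lfree :: "('i \<Rightarrow> 'a::real_vector) \<Rightarrow> 'i set \<Rightarrow> bool" where
  "lfree a J \<longleftrightarrow> (\<forall>g. (\<Sum>k\<in>J. g k *\<^sub>R a k) = 0 \<longrightarrow> (\<forall>k\<in>J. g k = 0))"

lemma cara:
  fixes a :: "'i \<Rightarrow> 'a::real_vector"
  assumes "finite I" "\<forall>k\<in>I. 0 \<le> l k"
  shows "\<exists>J m. J \<subseteq> I \<and> lfree a J \<and> (\<forall>k\<in>J. 0 \<le> m k) \<and>
           (\<Sum>k\<in>I. l k *\<^sub>R a k) = (\<Sum>k\<in>J. m k *\<^sub>R a k)"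
  using assms
proof (induction "card I" arbitrary: I l rule: less_induct)
  case less
  show ?case
  proof (cases "lfree a I")
    case True then show ?thesis using less.prems by blast
  next
    case False
    then obtain g where g0: "(\<Sum>k\<in>I. g k *\<^sub>R a k) = 0" and gnz: "\<exists>k\<in>I. g k \<noteq> 0"
      unfolding lfree_def by blast
    have "\<exists>c. (\<Sum>k\<in>I. c k *\<^sub>R a k) = 0 \<and> (\<exists>k\<in>I. c k > 0)"
    proof (cases "\<exists>k\<in>I. g k > 0")
      case True then show ?thesis using g0 by blast
    next
      case False
      then have "\<exists>k\<in>I. -g k > 0" using gnz by force
      moreover have "(\<Sum>k\<in>I. (-g k) *\<^sub>R a k) = 0" using g0 by (simp add: sum_negf)
      ultimately show ?thesis by (intro exI[of _ "\<lambda>k. - g k"]) simp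
    qed
    then obtain c where c0: "(\<Sum>k\<in>I. c k *\<^sub>R a k) = 0" and cpos: "\<exists>k\<in>I. c k > 0" by blast
    define Pos where "Pos = {k\<in>I. c k > 0}"
    have finP: "finite Pos" "Pos \<noteq> {}" using less.prems(1) cpos by (auto simp: Pos_def)
    define t where "t = Min ((\<lambda>k. l k / c k) ` Pos)"
    have "t \<in> (\<lambda>k. l k / c k) ` Pos" using Min_in finP t_def by simp
    then obtain k0 where k0: "k0 \<in> Pos" "t = l k0 / c k0" by blast
    have tle: "t \<le> l k / c k" if "k \<in> Pos" for k using finP that t_def by auto
    have k0I: "k0 \<in> I" using k0 Pos_def by auto
    have t0: "t \<ge> 0" using k0 less.prems(2) k0I by (auto simp: Pos_def)
    define m where "m k = l k - t * c k" for k
    have m0: "\<forall>k\<in>I. 0 \<le> m k"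
    proof
      fix k assume k: "k \<in> I"
      show "0 \<le> m k"
      proof (cases "c k > 0")
        case True
        then have "t \<le> l k / c k" using tle k Pos_def by auto
        then have "t * c k \<le> l k" using True by (simp add: pos_le_divide_eq)
        then show ?thesis by (simp add: m_def)
      next
        case False
        then have "t * c k \<le> 0" using t0 by (simp add: mult_nonneg_nonpos)
        moreover have "0 \<le> l k" using less.prems(2) k by blast
        ultimately show ?thesis by (simp add: m_def)
      qed
    qed
    have mk0: "m k0 = 0" using k0 by (auto simp: m_def Pos_def)
    have "(\<Sum>k\<in>I. m k *\<^sub>R a k) = (\<Sum>k\<in>I. l k *\<^sub>R a k) - t *\<^sub>R (\<Sum>k\<in>I. c k *\<^sub>R a k)"
      by (simp add: m_def algebra_simps scaleR_sum_right sum_subtractf)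
    hence eq1: "(\<Sum>k\<in>I. m k *\<^sub>R a k) = (\<Sum>k\<in>I. l k *\<^sub>R a k)" using c0 by simp
    have eq2: "(\<Sum>k\<in>I. m k *\<^sub>R a k) = (\<Sum>k\<in>I - {k0}. m k *\<^sub>R a k)"
      using sum.remove[OF less.prems(1) k0I, of "\<lambda>k. m k *\<^sub>R a k"] mk0 by simp
    have "card (I - {k0}) < card I" by (rule card_Diff1_less[OF less.prems(1) k0I])
    moreover have "finite (I - {k0})" using less.prems(1) by simp
    moreover have "\<forall>k\<in>I - {k0}. 0 \<le> m k" using m0 by simp
    ultimately have "\<exists>J n. J \<subseteq> I - {k0} \<and> lfree a J \<and> (\<forall>k\<in>J. 0 \<le> n k) \<and>
      (\<Sum>k\<in>I - {k0}. m k *\<^sub>R a k) = (\<Sum>k\<in>J. n k *\<^sub>R a k)"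
      by (rule less.hyps)
    then obtain J n where J1: "J \<subseteq> I - {k0}" and J2: "lfree a J" and J3: "\<forall>k\<in>J. 0 \<le> n k"
      and J4: "(\<Sum>k\<in>I - {k0}. m k *\<^sub>R a k) = (\<Sum>k\<in>J. n k *\<^sub>R a k)" by blast
    have J5: "J \<subseteq> I" using J1 by blast
    have J6: "(\<Sum>k\<in>I. l k *\<^sub>R a k) = (\<Sum>k\<in>J. n k *\<^sub>R a k)" using eq1 eq2 J4 by metis
    show ?thesis by (intro exI[of _ J] exI[of _ n] conjI J2 J3 J5 J6)
  qed
qed

lemma lfree_bound:
  fixes a :: "'i \<Rightarrow> 'a::euclidean_space"
  assumes fin: "finite J" and lf: "lfree a J"
  shows "\<exists>T\<ge>0. \<forall>g. (\<Sum>k\<in>J. \<bar>g k\<bar>) \<le> T * norm (\<Sum>k\<in>J. g k *\<^sub>R a k)"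
proof -
  have inj: "inj_on a J"
  proof (rule inj_onI, rule ccontr)
    fix j k assume jk: "j \<in> J" "k \<in> J" "a j = a k" "j \<noteq> k"
    define g where "g i = (if i = j then 1 else if i = k then -1 else (0::real))" for i
    have gi: "g i *\<^sub>R a i = (if i = j then a j else 0) - (if i = k then a k else 0)" for i
      using jk(4) by (cases "i = j"; cases "i = k") (simp_all add: g_def)
    have "(\<Sum>i\<in>J. g i *\<^sub>R a i) = (\<Sum>i\<in>J. (if i = j then a j else 0) - (if i = k then a k else 0))"
      by (rule sum.cong[OF refl]) (rule gi)
    also have "\<dots> = a j - a k" using fin jk(1,2) by (simp add: sum_subtractf)
    also have "\<dots> = 0" using jk(3) by simp
    finally have "(\<Sum>i\<in>J. g i *\<^sub>R a i) = 0" .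
    from lf[unfolded lfree_def, rule_format, OF this jk(1)] have "g j = 0" .
    then show False by (simp add: g_def)
  qed
  have ind: "independent (a ` J)"
    unfolding independent_explicit
  proof (intro conjI allI impI ballI)
    show "finite (a ` J)" using fin by simp
    fix c v assume c: "(\<Sum>v\<in>a ` J. c v *\<^sub>R v) = 0" and v: "v \<in> a ` J"
    have "(\<Sum>k\<in>J. c (a k) *\<^sub>R a k) = 0" using c by (simp add: sum.reindex[OF inj])
    from lf[unfolded lfree_def, rule_format, OF this] have "\<And>k. k \<in> J \<Longrightarrow> c (a k) = 0" .
    then show "c v = 0" using v by blast
  qed
  have "\<forall>j\<in>J. \<exists>B. \<forall>g. \<bar>g j\<bar> \<le> B * norm (\<Sum>k\<in>J. g k *\<^sub>R a k)"
  proof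
    fix j assume j: "j \<in> J"
    obtain f :: "'a \<Rightarrow> real" where f: "linear f" "\<forall>x\<in>a ` J. f x = (if x = a j then 1 else 0)"
      using linear_independent_extend[OF ind, of "\<lambda>x. if x = a j then 1 else 0"] by blast
    obtain B where B: "\<forall>x. norm (f x) \<le> B * norm x" using linear_bounded[OF f(1)] by blast
    have "\<forall>g. \<bar>g j\<bar> \<le> B * norm (\<Sum>k\<in>J. g k *\<^sub>R a k)"
    proof
      fix g :: "'i \<Rightarrow> real"
      have "f (\<Sum>k\<in>J. g k *\<^sub>R a k) = (\<Sum>k\<in>J. g k * f (a k))"
        using f(1) by (simp add: linear_sum linear_scale)
      also have "\<dots> = (\<Sum>k\<in>J. if k = j then g k else 0)"
      proof (rule sum.cong[OF refl])
        fix k assume k: "k \<in> J"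
        have "f (a k) = (if a k = a j then 1 else 0)" using f(2) k by blast
        moreover have "(a k = a j) = (k = j)" using inj k j by (meson inj_on_eq_iff)
        ultimately show "g k * f (a k) = (if k = j then g k else 0)" by simp
      qed
      also have "\<dots> = g j" using fin j by simp
      finally have "g j = f (\<Sum>k\<in>J. g k *\<^sub>R a k)" by simp
      then show "\<bar>g j\<bar> \<le> B * norm (\<Sum>k\<in>J. g k *\<^sub>R a k)" using B by (metis real_norm_def)
    qed
    then show "\<exists>B. \<forall>g. \<bar>g j\<bar> \<le> B * norm (\<Sum>k\<in>J. g k *\<^sub>R a k)" by blast
  qed
  then obtain B where B: "\<forall>j\<in>J. \<forall>g. \<bar>g j\<bar> \<le> B j * norm (\<Sum>k\<in>J. g k *\<^sub>R a k)"
    by metis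
  show ?thesis
  proof (intro exI[of _ "\<Sum>j\<in>J. \<bar>B j\<bar>"] conjI allI)
    show "0 \<le> (\<Sum>j\<in>J. \<bar>B j\<bar>)" by (simp add: sum_nonneg)
    fix g :: "'i \<Rightarrow> real"
    have "(\<Sum>k\<in>J. \<bar>g k\<bar>) \<le> (\<Sum>j\<in>J. \<bar>B j\<bar> * norm (\<Sum>k\<in>J. g k *\<^sub>R a k))"
    proof (rule sum_mono)
      fix j assume "j \<in> J"
      then have "\<bar>g j\<bar> \<le> B j * norm (\<Sum>k\<in>J. g k *\<^sub>R a k)" using B by blast
      also have "\<dots> \<le> \<bar>B j\<bar> * norm (\<Sum>k\<in>J. g k *\<^sub>R a k)"
        by (rule mult_right_mono) auto
      finally show "\<bar>g j\<bar> \<le> \<bar>B j\<bar> * norm (\<Sum>k\<in>J. g k *\<^sub>R a k)" .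
    qed
    then show "(\<Sum>k\<in>J. \<bar>g k\<bar>) \<le> (\<Sum>j\<in>J. \<bar>B j\<bar>) * norm (\<Sum>k\<in>J. g k *\<^sub>R a k)"
      by (simp add: sum_distrib_right)
  qed
qed


lemma cone_closed:
  fixes a :: "'i \<Rightarrow> 'a::euclidean_space"
  assumes fin: "finite I"
  shows "closed {(\<Sum>k\<in>I. l k *\<^sub>R a k) | l. \<forall>k\<in>I. 0 \<le> l k}"
    and "convex {(\<Sum>k\<in>I. l k *\<^sub>R a k) | l. \<forall>k\<in>I. 0 \<le> l k}"
    and "conic {(\<Sum>k\<in>I. l k *\<^sub>R a k) | l. \<forall>k\<in>I. 0 \<le> l k}"
proof -
  define C where "C = {(\<Sum>k\<in>I. l k *\<^sub>R a k) | l. \<forall>k\<in>I. 0 \<le> l k}"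
  show cv: "convex C"
    unfolding convex_def C_def
  proof (intro ballI allI impI)
    fix x y :: 'a and u v :: real
    assume x: "x \<in> {(\<Sum>k\<in>I. l k *\<^sub>R a k) | l. \<forall>k\<in>I. 0 \<le> l k}"
      and y: "y \<in> {(\<Sum>k\<in>I. l k *\<^sub>R a k) | l. \<forall>k\<in>I. 0 \<le> l k}"
      and uv: "0 \<le> u" "0 \<le> v" "u + v = 1"
    obtain l1 where l1: "x = (\<Sum>k\<in>I. l1 k *\<^sub>R a k)" "\<forall>k\<in>I. 0 \<le> l1 k" using x by blast
    obtain l2 where l2: "y = (\<Sum>k\<in>I. l2 k *\<^sub>R a k)" "\<forall>k\<in>I. 0 \<le> l2 k" using y by blast
    have "u *\<^sub>R x + v *\<^sub>R y = (\<Sum>k\<in>I. (u * l1 k + v * l2 k) *\<^sub>R a k)"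
      by (simp add: l1 l2 scaleR_sum_right sum.distrib scaleR_add_left)
    moreover have "\<forall>k\<in>I. 0 \<le> u * l1 k + v * l2 k" using l1 l2 uv by simp
    ultimately show "u *\<^sub>R x + v *\<^sub>R y \<in> {(\<Sum>k\<in>I. l k *\<^sub>R a k) | l. \<forall>k\<in>I. 0 \<le> l k}"
      by (auto intro!: exI[of _ "\<lambda>k. u * l1 k + v * l2 k"])
  qed
  show cn: "conic C"
    unfolding conic_def C_def
  proof (intro allI impI)
    fix x :: 'a and c :: real
    assume x: "x \<in> {(\<Sum>k\<in>I. l k *\<^sub>R a k) | l. \<forall>k\<in>I. 0 \<le> l k}" and c: "0 \<le> c"
    obtain l1 where l1: "x = (\<Sum>k\<in>I. l1 k *\<^sub>R a k)" "\<forall>k\<in>I. 0 \<le> l1 k" using x by blast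
    have "c *\<^sub>R x = (\<Sum>k\<in>I. (c * l1 k) *\<^sub>R a k)" by (simp add: l1 scaleR_sum_right)
    moreover have "\<forall>k\<in>I. 0 \<le> c * l1 k" using l1 c by simp
    ultimately show "c *\<^sub>R x \<in> {(\<Sum>k\<in>I. l k *\<^sub>R a k) | l. \<forall>k\<in>I. 0 \<le> l k}"
      by (auto intro!: exI[of _ "\<lambda>k. c * l1 k"])
  qed
  show "closed C"
  proof (cases "I = {}")
    case True
    then have "C = {0}" by (auto simp: C_def)
    then show ?thesis by simp
  next
    case False
    have ak: "a k \<in> C" if "k \<in> I" for k
    proof -
      have "(\<Sum>i\<in>I. (if i = k then 1 else 0) *\<^sub>R a i) = (\<Sum>i\<in>I. if i = k then a i else 0)"
        by (rule sum.cong) auto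
      also have "\<dots> = a k" using fin that by simp
      finally show ?thesis unfolding C_def
        by (intro CollectI exI[of _ "\<lambda>i. if i = k then 1 else 0"]) auto
    qed
    have "C = conic hull (convex hull (a ` I))"
    proof
      show "conic hull (convex hull (a ` I)) \<subseteq> C"
        by (intro hull_minimal cn) (use ak cv in \<open>auto intro: hull_minimal\<close>)
      show "C \<subseteq> conic hull (convex hull (a ` I))"
      proof
        fix x assume "x \<in> C"
        then obtain l where l: "x = (\<Sum>k\<in>I. l k *\<^sub>R a k)" "\<forall>k\<in>I. 0 \<le> l k"
          unfolding C_def by blast
        define s where "s = (\<Sum>k\<in>I. l k)"
        show "x \<in> conic hull (convex hull (a ` I))"
        proof (cases "s = 0")
          case True
          then have "\<forall>k\<in>I. l k = 0" using sum_nonneg_eq_0_iff[OF fin, of l] l(2) unfolding s_def by simp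
          then have "x = 0" using l(1) by simp
          then show ?thesis using False by simp
        next
          case False
          have "s \<ge> 0" unfolding s_def using l(2) by (simp add: sum_nonneg)
          then have s0: "s > 0" using False by simp
          have "(\<Sum>k\<in>I. (l k / s) *\<^sub>R a k) \<in> convex hull (a ` I)"
          proof (rule convex_sum[OF fin convex_convex_hull])
            show "(\<Sum>i\<in>I. l i / s) = 1" using s0 by (simp add: s_def sum_divide_distrib[symmetric])
            show "\<And>i. i \<in> I \<Longrightarrow> 0 \<le> l i / s" using l(2) s0 by simp
            show "\<And>i. i \<in> I \<Longrightarrow> a i \<in> convex hull a ` I" by (simp add: hull_inc)
          qed
          moreover have "x = s *\<^sub>R (\<Sum>k\<in>I. (l k / s) *\<^sub>R a k)"
            using s0 by (simp add: l(1) scaleR_sum_right)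
          ultimately show ?thesis unfolding conic_hull_explicit using s0
            by (intro CollectI exI[of _ s] exI[of _ "\<Sum>k\<in>I. (l k / s) *\<^sub>R a k"] conjI) simp_all
        qed
      qed
    qed
    moreover have "polytope (convex hull (a ` I))" unfolding polytope_def using fin by blast
    ultimately show ?thesis
      using polyhedron_conic_hull_polytope polyhedron_imp_closed by metis
  qed
qed

lemma hoffman:
  fixes a :: "'i \<Rightarrow> 'a::euclidean_space"
  assumes finK: "finite K"
  shows "\<exists>\<theta>>0. \<forall>c x. {z. \<forall>k\<in>K. a k \<bullet> z \<le> c k} \<noteq> {} \<longrightarrow>
           (\<exists>z. (\<forall>k\<in>K. a k \<bullet> z \<le> c k) \<and> norm (x - z) \<le> \<theta> * (\<Sum>k\<in>K. max 0 (a k \<bullet> x - c k)))"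
proof -
  define Js where "Js = {J. J \<subseteq> K \<and> lfree a J}"
  have finJs: "finite Js" unfolding Js_def using finK by (simp add: finite_subset[of _ "Pow K"])
  have "\<forall>J\<in>Js. \<exists>T\<ge>0. \<forall>g. (\<Sum>k\<in>J. \<bar>g k\<bar>) \<le> T * norm (\<Sum>k\<in>J. g k *\<^sub>R a k)"
  proof
    fix J assume "J \<in> Js"
    then have "finite J" "lfree a J" unfolding Js_def using finK finite_subset by auto
    then show "\<exists>T\<ge>0. \<forall>g. (\<Sum>k\<in>J. \<bar>g k\<bar>) \<le> T * norm (\<Sum>k\<in>J. g k *\<^sub>R a k)"
      by (rule lfree_bound)
  qed
  then obtain Tf where Tf: "\<And>J. J \<in> Js \<Longrightarrow> Tf J \<ge> 0 \<and>
      (\<forall>g. (\<Sum>k\<in>J. \<bar>g k\<bar>) \<le> Tf J * norm (\<Sum>k\<in>J. g k *\<^sub>R a k))"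
    by metis
  define T where "T = (\<Sum>J\<in>Js. Tf J) + 1"
  have T0: "T > 0" unfolding T_def using Tf by (simp add: sum_nonneg add_nonneg_pos)
  have Tb: "(\<Sum>k\<in>J. \<bar>g k\<bar>) \<le> T * norm (\<Sum>k\<in>J. g k *\<^sub>R a k)" if "J \<in> Js" for J g
  proof -
    have "Tf J \<le> (\<Sum>J\<in>Js. Tf J)" using that finJs Tf by (intro member_le_sum) auto
    then have "Tf J \<le> T" unfolding T_def by simp
    then have "Tf J * norm (\<Sum>k\<in>J. g k *\<^sub>R a k) \<le> T * norm (\<Sum>k\<in>J. g k *\<^sub>R a k)"
      by (rule mult_right_mono) simp
    moreover have "(\<Sum>k\<in>J. \<bar>g k\<bar>) \<le> Tf J * norm (\<Sum>k\<in>J. g k *\<^sub>R a k)"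
      using Tf[OF that] by blast
    ultimately show ?thesis by linarith
  qed
  show ?thesis
  proof (intro exI[of _ T] conjI allI impI T0)
    fix c :: "'i \<Rightarrow> real" and x :: 'a
    define F where "F = {z. \<forall>k\<in>K. a k \<bullet> z \<le> c k}"
    assume Fne: "{z. \<forall>k\<in>K. a k \<bullet> z \<le> c k} \<noteq> {}"
    then have Fne': "F \<noteq> {}" unfolding F_def .
    have Feq: "F = (\<Inter>k\<in>K. {z. a k \<bullet> z \<le> c k})" unfolding F_def by auto
    have clF: "closed F" unfolding Feq by (intro closed_INT ballI closed_halfspace_le)
    have cvF: "convex F" unfolding Feq by (intro convex_INT ballI convex_halfspace_le)
    define z where "z = closest_point F x"
    have zF: "z \<in> F" unfolding z_def using closest_point_in_set[OF clF Fne'] .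
    have zdot: "(x - z) \<bullet> (y - z) \<le> 0" if "y \<in> F" for y
      unfolding z_def by (rule closest_point_dot[OF cvF clF that])
    define e where "e = x - z"
    define I where "I = {k\<in>K. a k \<bullet> z = c k}"
    have IK: "I \<subseteq> K" unfolding I_def by auto
    have finI: "finite I" using finite_subset[OF IK finK] .
    have normal: "e \<bullet> d \<le> 0" if d: "\<forall>k\<in>I. a k \<bullet> d \<le> 0" for d
    proof -
      define M where "M = (\<Sum>k\<in>K. \<bar>a k \<bullet> d\<bar>) + 1"
      have M1: "\<bar>a k \<bullet> d\<bar> + 1 \<le> M" if "k \<in> K" for k
        unfolding M_def using member_le_sum[OF that _ finK, of "\<lambda>k. \<bar>a k \<bullet> d\<bar>"] by simp
      have M0: "M > 0" unfolding M_def by (simp add: sum_nonneg add_nonneg_pos)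
      define \<delta> where "\<delta> = Min (insert 1 ((\<lambda>k. c k - a k \<bullet> z) ` (K - I)))"
      have fin\<delta>: "finite (insert 1 ((\<lambda>k. c k - a k \<bullet> z) ` (K - I)))" using finK by simp
      have slack: "a k \<bullet> z < c k" if "k \<in> K - I" for k
        using that zF unfolding F_def I_def by force
      have \<delta>0: "\<delta> > 0" unfolding \<delta>_def using fin\<delta> slack by (subst Min_gr_iff) auto
      have \<delta>le: "\<delta> \<le> c k - a k \<bullet> z" if "k \<in> K - I" for k
        unfolding \<delta>_def using fin\<delta> that by (intro Min_le) auto
      define t where "t = \<delta> / M"
      have t0: "t > 0" unfolding t_def using \<delta>0 M0 by simp
      have "z + t *\<^sub>R d \<in> F"
        unfolding F_def
      proof (intro CollectI ballI)
        fix k assume k: "k \<in> K"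
        have eq: "a k \<bullet> (z + t *\<^sub>R d) = a k \<bullet> z + t * (a k \<bullet> d)" by (simp add: inner_add_right)
        show "a k \<bullet> (z + t *\<^sub>R d) \<le> c k"
        proof (cases "k \<in> I")
          case True
          then have "a k \<bullet> z = c k" "a k \<bullet> d \<le> 0" using d I_def by auto
          then show ?thesis unfolding eq using t0 by (simp add: mult_nonneg_nonpos)
        next
          case False
          have "t * (a k \<bullet> d) \<le> t * \<bar>a k \<bullet> d\<bar>" using t0 by simp
          also have "\<dots> \<le> t * M" using M1[OF k] t0 by simp
          also have "\<dots> = \<delta>" unfolding t_def using M0 by simp
          also have "\<dots> \<le> c k - a k \<bullet> z" using \<delta>le k False by blast
          finally show ?thesis unfolding eq by simp
        qed
      qed
      from zdot[OF this] have "t * (e \<bullet> d) \<le> 0" unfolding e_def by simp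
      then show ?thesis using t0 by (simp add: mult_le_0_iff)
    qed
    define C where "C = {(\<Sum>k\<in>I. l k *\<^sub>R a k) | l. \<forall>k\<in>I. 0 \<le> l k}"
    have eC: "e \<in> C"
    proof (rule ccontr)
      assume "e \<notin> C"
      then obtain p b where pb: "p \<bullet> e < b" "\<forall>y\<in>C. p \<bullet> y > b"
        using separating_hyperplane_closed_point[OF cone_closed(2)[OF finI] cone_closed(1)[OF finI]]
        unfolding C_def by blast
      have "0 \<in> C" unfolding C_def by (intro CollectI exI[of _ "\<lambda>k. 0"]) simp
      then have b0: "b < 0" using pb by force
      have pa: "a k \<bullet> (-p) \<le> 0" if k: "k \<in> I" for k
      proof (rule ccontr)
        assume "\<not> a k \<bullet> (-p) \<le> 0"
        then have neg: "p \<bullet> a k < 0" by (simp add: inner_commute)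
        have akC: "a k \<in> C"
        proof -
          have "(\<Sum>i\<in>I. (if i = k then 1 else 0) *\<^sub>R a i) = (\<Sum>i\<in>I. if i = k then a i else 0)"
            by (rule sum.cong[OF refl]) simp
          also have "\<dots> = a k" using finI k by simp
          finally show ?thesis unfolding C_def
            by (intro CollectI exI[of _ "\<lambda>i. if i = k then 1 else 0"] conjI) auto
        qed
        have "(b / (p \<bullet> a k)) *\<^sub>R a k \<in> C"
        proof (rule conicD[OF _ akC])
          show "conic C" using cone_closed(3)[OF finI] unfolding C_def .
          show "0 \<le> b / (p \<bullet> a k)" using b0 neg by (simp add: divide_nonpos_neg)
        qed
        then have "p \<bullet> ((b / (p \<bullet> a k)) *\<^sub>R a k) > b" using pb by blast
        then show False using neg by simp
      qed
      have "e \<bullet> (-p) \<le> 0" using normal pa by blast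
      then show False using pb b0 by (simp add: inner_commute)
    qed
    then obtain l where l: "e = (\<Sum>k\<in>I. l k *\<^sub>R a k)" "\<forall>k\<in>I. 0 \<le> l k"
      unfolding C_def by blast
    obtain J m where Jm: "J \<subseteq> I" "lfree a J" "\<forall>k\<in>J. 0 \<le> m k"
      "(\<Sum>k\<in>I. l k *\<^sub>R a k) = (\<Sum>k\<in>J. m k *\<^sub>R a k)"
      using cara[OF finI l(2)] by blast
    have JJs: "J \<in> Js" unfolding Js_def using Jm IK by auto
    have finJ: "finite J" using finite_subset[OF Jm(1) finI] .
    have eJ: "e = (\<Sum>k\<in>J. m k *\<^sub>R a k)" using l(1) Jm(4) by simp
    define R where "R = (\<Sum>k\<in>K. max 0 (a k \<bullet> x - c k))"
    have R0: "R \<ge> 0" unfolding R_def by (simp add: sum_nonneg)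
    have sm: "(\<Sum>k\<in>J. m k) \<le> T * norm e"
    proof -
      have "(\<Sum>k\<in>J. m k) = (\<Sum>k\<in>J. \<bar>m k\<bar>)" using Jm(3) by (intro sum.cong) auto
      also have "\<dots> \<le> T * norm e" unfolding eJ by (rule Tb[OF JJs])
      finally show ?thesis .
    qed
    have "(norm e)\<^sup>2 = e \<bullet> e" by (simp add: power2_norm_eq_inner)
    also have "\<dots> = (\<Sum>k\<in>J. m k * (a k \<bullet> e))"
      by (subst (1) eJ) (simp add: inner_sum_left)
    also have "\<dots> \<le> (\<Sum>k\<in>J. m k * R)"
    proof (rule sum_mono)
      fix k assume k: "k \<in> J"
      then have kI: "k \<in> I" and kK: "k \<in> K" using Jm(1) IK by auto
      have "a k \<bullet> e = a k \<bullet> x - c k" using kI unfolding e_def I_def by (simp add: inner_diff_right)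
      also have "\<dots> \<le> max 0 (a k \<bullet> x - c k)" by simp
      also have "\<dots> \<le> R" unfolding R_def by (rule member_le_sum[OF kK _ finK]) simp
      finally show "m k * (a k \<bullet> e) \<le> m k * R" using Jm(3) k by (simp add: mult_left_mono)
    qed
    also have "\<dots> = (\<Sum>k\<in>J. m k) * R" by (simp add: sum_distrib_right)
    also have "\<dots> \<le> T * norm e * R" using sm R0 by (rule mult_right_mono)
    finally have ee: "(norm e)\<^sup>2 \<le> T * R * norm e" by (simp add: algebra_simps)
    have "norm e \<le> T * R"
    proof (cases "norm e = 0")
      case True then show ?thesis using T0 R0 by simp
    next
      case False
      then have "norm e > 0" by simp
      then show ?thesis using ee by (simp add: power2_eq_square)
    qed
    then show "\<exists>z. (\<forall>k\<in>K. a k \<bullet> z \<le> c k) \<and> norm (x - z) \<le> T * (\<Sum>k\<in>K. max 0 (a k \<bullet> x - c k))"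
      using zF unfolding F_def e_def R_def by blast
  qed
qed

lemma adj_mat: "((M::real^'a^'b) *v x) \<bullet> y = x \<bullet> (transpose M *v y)"
  by (metis dot_lmul_matrix vector_transpose_matrix)

lemma opbound:
  fixes A :: "real^'n^'m"
  shows "(transpose A *v d) \<bullet> (transpose A *v d) \<le> onorm (\<lambda>x. (transpose A ** A) *v x) * (norm d)\<^sup>2"
proof -
  define x where "x = transpose A *v d"
  define M where "M = onorm (\<lambda>x. (transpose A ** A) *v x)"
  have M0: "M \<ge> 0" unfolding M_def by (rule onorm_pos_le[OF matrix_vector_mul_bounded_linear])
  have "x \<bullet> x = (A *v x) \<bullet> d" unfolding adj_mat x_def ..
  also have "\<dots> \<le> norm (A *v x) * norm d" by (rule norm_cauchy_schwarz)
  finally have 1: "(norm x)\<^sup>2 \<le> norm (A *v x) * norm d" by (simp add: power2_norm_eq_inner)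
  have "(norm (A *v x))\<^sup>2 = (A *v x) \<bullet> (A *v x)" by (simp add: power2_norm_eq_inner)
  also have "\<dots> = x \<bullet> ((transpose A ** A) *v x)" unfolding adj_mat matrix_vector_mul_assoc ..
  also have "\<dots> \<le> norm x * norm ((transpose A ** A) *v x)" by (rule norm_cauchy_schwarz)
  also have "\<dots> \<le> norm x * (M * norm x)"
    unfolding M_def by (rule mult_left_mono[OF onorm[OF matrix_vector_mul_bounded_linear]]) simp
  also have "\<dots> = (sqrt M * norm x)\<^sup>2" using M0 by (simp add: power2_eq_square power_mult_distrib)
  finally have "norm (A *v x) \<le> sqrt M * norm x"
    by (rule power2_le_imp_le) (use M0 in simp)
  with 1 have 2: "(norm x)\<^sup>2 \<le> sqrt M * norm x * norm d"
    by (meson mult_right_mono norm_ge_zero order_trans)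
  have "norm x \<le> sqrt M * norm d"
  proof (cases "norm x = 0")
    case True then show ?thesis using M0 by simp
  next
    case False
    then have "norm x > 0" by simp
    then show ?thesis using 2 by (simp add: power2_eq_square mult.assoc)
  qed
  then have "(norm x)\<^sup>2 \<le> (sqrt M * norm d)\<^sup>2" by (rule power_mono) simp
  also have "\<dots> = M * (norm d)\<^sup>2" using M0 by (simp add: power_mult_distrib)
  finally show ?thesis unfolding M_def x_def by (simp add: power2_norm_eq_inner)
qed

lemma quad_expand:
  fixes B :: "real^'m^'n" and y :: "real^'n"
  shows "lam/2 * ((B *v (w + d)) \<bullet> (B *v (w + d))) - (B *v (w + d)) \<bullet> y =
    (lam/2 * ((B *v w) \<bullet> (B *v w)) - (B *v w) \<bullet> y) + ((lam *\<^sub>R (B *v w) - y) v* B) \<bullet> d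
      + lam/2 * ((B *v d) \<bullet> (B *v d))"
proof -
  define p where "p = B *v w"
  define q where "q = B *v d"
  have e1: "B *v (w + d) = p + q" unfolding p_def q_def by (simp add: matrix_vector_right_distrib)
  have e2: "((lam *\<^sub>R (B *v w) - y) v* B) \<bullet> d = (lam *\<^sub>R p - y) \<bullet> q"
    unfolding dot_lmul_matrix p_def q_def ..
  show ?thesis unfolding e2 unfolding e1 p_def[symmetric] q_def[symmetric]
    by (simp add: inner_add_left inner_add_right inner_diff_left inner_commute algebra_simps)
qed

lemma vl_inner: "x \<bullet> (z v* (B::real^'m^'n)) = z \<bullet> (B *v x)"
  by (metis dot_lmul_matrix inner_commute)

lemma quad_deriv:
  fixes B :: "real^'m^'n" and y :: "real^'n"
  shows "((\<lambda>v. lam/2 * ((B *v v) \<bullet> (B *v v)) - (B *v v) \<bullet> y) has_derivative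
      (\<lambda>h. ((lam *\<^sub>R (B *v w) - y) v* B) \<bullet> h)) (at w)"
proof -
  have lin: "((\<lambda>v. B *v v) has_derivative (\<lambda>h. B *v h)) (at w)"
    by (rule bounded_linear_imp_has_derivative[OF matrix_vector_mul_bounded_linear])
  show ?thesis
    apply (rule has_derivative_eq_rhs)
     apply (rule has_derivative_diff[OF has_derivative_mult[OF has_derivative_const
            has_derivative_inner[OF lin lin]] has_derivative_inner[OF lin has_derivative_const]])
    apply (rule ext)
    apply (simp add: vl_inner dot_lmul_matrix inner_diff_left inner_commute algebra_simps)
    done
qed

theorem theorem7p6:
  fixes N :: nat
    and w :: "nat \<Rightarrow> real^'m"
    and A :: "real^'n^'m"
    and \<omega> :: "real^'m \<Rightarrow> real"
    and h :: "real \<Rightarrow> real^'n \<Rightarrow> real^'n \<Rightarrow> real"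
    and \<Psi> :: "real \<Rightarrow> real^'n \<Rightarrow> real^'m \<Rightarrow> ereal"
  assumes N: "N \<ge> 1"
    and \<omega>_def: "\<And>z. \<omega> z = Max ((\<lambda>i. w i \<bullet> z) ` {1..N})"
    and h_def: "\<And>lam y u. h lam y u =
        1 / (2 * lam) * (norm (lam *\<^sub>R u - y))\<^sup>2 - 1 / (2 * lam) * (norm y)\<^sup>2"
    and \<Psi>_def: "\<And>lam y v. \<Psi> lam y v = ereal (h lam y (transpose A *v v)) + fenchel_conj \<omega> v"
  shows "(Max ((\<lambda>i. norm (w i)) ` {1..N}))-lipschitz_on UNIV \<omega>
       \<and> bounded (edom (fenchel_conj \<omega>))
       \<and> (\<exists>\<theta>>0.
            (\<forall>lam>0. \<forall>y.
               convex_on UNIV (\<lambda>v. h lam y (transpose A *v v))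
             \<and> lipschitz_smooth (\<lambda>v. h lam y (transpose A *v v))
                   (lam * onorm (\<lambda>x. (transpose A ** A) *v x))
             \<and> minimizers (\<Psi> lam y) \<noteq> {}
             \<and> quadratic_growth (\<Psi> lam y) (lam / \<theta>\<^sup>2))
          \<and> (\<forall>lmin lam. 0 < lmin \<and> lmin \<le> lam \<longrightarrow> lam / \<theta>\<^sup>2 \<ge> lmin / \<theta>\<^sup>2))"
proof -
  let ?I = "{1..N}"
  have finI: "finite ?I" and neI: "?I \<noteq> {}" using N by auto
  define P where "P = convex hull (w ` ?I)"
  have cpP: "compact P" unfolding P_def by (simp add: compact_convex_hull finite_imp_compact)
  have cvP: "convex P" unfolding P_def by simp
  have neP: "P \<noteq> {}" using neI unfolding P_def by simp
  have wP: "w i \<in> P" if "i \<in> ?I" for i unfolding P_def using that by (simp add: hull_inc)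
  have om_ge: "w i \<bullet> z \<le> \<omega> z" if "i \<in> ?I" for i z
    unfolding \<omega>_def using finI that by (intro Max_ge) auto
  have om_le: "\<omega> z \<le> b" if "\<forall>i\<in>?I. w i \<bullet> z \<le> b" for z b
    unfolding \<omega>_def using finI neI that by (subst Max_le_iff) auto
  have om_in: "\<exists>i\<in>?I. \<omega> z = w i \<bullet> z" for z
  proof -
    have "\<omega> z \<in> (\<lambda>i. w i \<bullet> z) ` ?I" unfolding \<omega>_def using finI neI by (intro Max_in) auto
    then show ?thesis by auto
  qed
  have fc: "fenchel_conj \<omega> v = (if v \<in> P then 0 else \<infinity>)" for v
  proof (cases "v \<in> P")
    case True
    have le0: "v \<bullet> z - \<omega> z \<le> 0" for z
    proof -
      have "P \<subseteq> {x. z \<bullet> x \<le> \<omega> z}" unfolding P_def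
      proof (rule hull_minimal)
        show "w ` ?I \<subseteq> {x. z \<bullet> x \<le> \<omega> z}" using om_ge by (auto simp: inner_commute)
        show "convex {x. z \<bullet> x \<le> \<omega> z}" by (rule convex_halfspace_le)
      qed
      then show ?thesis using True by (auto simp: inner_commute)
    qed
    have le: "fenchel_conj \<omega> v \<le> 0" unfolding fenchel_conj_def
      by (rule SUP_least) (use le0 in \<open>simp add: zero_ereal_def\<close>)
    have "\<omega> 0 = 0" unfolding \<omega>_def using neI by simp
    then have ge: "0 \<le> fenchel_conj \<omega> v" unfolding fenchel_conj_def
      by (intro SUP_upper2[of 0]) (auto simp: zero_ereal_def)
    show ?thesis using le ge True by simp
  next
    case False
    obtain p b where pb: "p \<bullet> v < b" "\<forall>x\<in>P. p \<bullet> x > b"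
      using separating_hyperplane_closed_point[OF cvP compact_imp_closed[OF cpP] False] by blast
    define q where "q = -p"
    define \<delta> where "\<delta> = q \<bullet> v + b"
    have \<delta>0: "\<delta> > 0" using pb by (simp add: q_def \<delta>_def)
    have wq: "w i \<bullet> q \<le> -b" if "i \<in> ?I" for i
    proof -
      have "p \<bullet> w i > b" using pb(2) wP[OF that] by blast
      then show ?thesis by (simp add: q_def inner_commute)
    qed
    have big: "t * \<delta> \<le> v \<bullet> (t *\<^sub>R q) - \<omega> (t *\<^sub>R q)" if t: "t \<ge> 0" for t
    proof -
      have "\<omega> (t *\<^sub>R q) \<le> t * (-b)"
      proof (rule om_le, rule ballI)
        fix i assume "i \<in> ?I"
        then have "w i \<bullet> q \<le> -b" by (rule wq)
        then have "t * (w i \<bullet> q) \<le> t * (-b)" using t by (rule mult_left_mono)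
        then show "w i \<bullet> (t *\<^sub>R q) \<le> t * (-b)" by simp
      qed
      then show ?thesis unfolding \<delta>_def by (simp add: inner_commute algebra_simps)
    qed
    have "fenchel_conj \<omega> v = \<infinity>"
    proof (rule ereal_top)
      fix r :: real
      define t where "t = max 0 r / \<delta>"
      have t0: "t \<ge> 0" unfolding t_def using \<delta>0 by simp
      have "r \<le> t * \<delta>" unfolding t_def using \<delta>0 by simp
      also have "\<dots> \<le> v \<bullet> (t *\<^sub>R q) - \<omega> (t *\<^sub>R q)" by (rule big[OF t0])
      finally have "ereal r \<le> ereal (v \<bullet> (t *\<^sub>R q) - \<omega> (t *\<^sub>R q))" by simp
      also have "\<dots> \<le> fenchel_conj \<omega> v" unfolding fenchel_conj_def by (rule SUP_upper) simp
      finally show "ereal r \<le> fenchel_conj \<omega> v" .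
    qed
    then show ?thesis using False by simp
  qed
  define Kw where "Kw = Max ((\<lambda>i. norm (w i)) ` ?I)"
  have wK: "norm (w i) \<le> Kw" if "i \<in> ?I" for i
    unfolding Kw_def using finI that by (intro Max_ge) auto
  have Kw0: "0 \<le> Kw" using wK[of 1] N by (meson atLeastAtMost_iff le_refl norm_ge_zero order_trans)
  have lip: "Kw-lipschitz_on UNIV \<omega>"
  proof (rule lipschitz_onI[OF _ Kw0])
    have one: "\<omega> x - \<omega> z \<le> Kw * dist x z" for x z
    proof -
      obtain i where i: "i \<in> ?I" "\<omega> x = w i \<bullet> x" using om_in by blast
      have "\<omega> x - \<omega> z \<le> w i \<bullet> x - w i \<bullet> z" using om_ge[OF i(1), of z] i by simp
      also have "\<dots> = w i \<bullet> (x - z)" by (simp add: inner_diff_right)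
      also have "\<dots> \<le> norm (w i) * norm (x - z)" by (rule norm_cauchy_schwarz)
      also have "\<dots> \<le> Kw * norm (x - z)" using wK[OF i(1)] by (rule mult_right_mono) simp
      finally show ?thesis by (simp add: dist_norm)
    qed
    fix x z :: "real^'m"
    show "dist (\<omega> x) (\<omega> z) \<le> Kw * dist x z"
      using one[of x z] one[of z x] by (simp add: dist_real_def dist_commute abs_le_iff)
  qed
  have edomP: "edom (fenchel_conj \<omega>) = P" unfolding edom_def using fc by auto
  have bnd: "bounded (edom (fenchel_conj \<omega>))" using edomP cpP compact_imp_bounded by simp
  have "polytope P" unfolding P_def polytope_def using finI by blast
  then have "polyhedron P" by (rule polytope_imp_polyhedron)
  then obtain F where F: "finite F" "P = \<Inter>F" "\<forall>h\<in>F. \<exists>a b. a \<noteq> 0 \<and> h = {x. a \<bullet> x \<le> b}"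
    unfolding polyhedron_def by blast
  have "\<forall>h\<in>F. \<exists>ab. \<forall>x. x \<in> h \<longleftrightarrow> fst ab \<bullet> x \<le> snd ab"
  proof
    fix h assume "h \<in> F"
    then obtain a b where "h = {x. a \<bullet> x \<le> b}" using F(3) by blast
    then show "\<exists>ab. \<forall>x. x \<in> h \<longleftrightarrow> fst ab \<bullet> x \<le> snd ab" by (intro exI[of _ "(a, b)"]) simp
  qed
  then obtain hab where hab: "\<And>h x. h \<in> F \<Longrightarrow> x \<in> h \<longleftrightarrow> fst (hab h) \<bullet> x \<le> snd (hab h)"
    by metis
  define B where "B = transpose A"
  define K where "K = Inl ` F \<union> Inr ` (UNIV :: ('n \<times> bool) set)"
  define av where "av k = (case k of Inl h \<Rightarrow> fst (hab h) | Inr js \<Rightarrow> (if snd js then B $ fst js else - (B $ fst js)))"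
    for k :: "(real^'m) set + ('n \<times> bool)"
  define cv where "cv u k = (case k of Inl h \<Rightarrow> snd (hab h) | Inr js \<Rightarrow> (if snd js then u $ fst js else - (u $ fst js)))"
    for u :: "real^'n" and k :: "(real^'m) set + ('n \<times> bool)"
  have finK: "finite K" unfolding K_def using F(1) by simp
  obtain \<theta> where \<theta>0: "\<theta> > 0" and \<theta>H: "\<forall>c x. {z. \<forall>k\<in>K. av k \<bullet> z \<le> c k} \<noteq> {} \<longrightarrow>
      (\<exists>z. (\<forall>k\<in>K. av k \<bullet> z \<le> c k) \<and> norm (x - z) \<le> \<theta> * (\<Sum>k\<in>K. max 0 (av k \<bullet> x - c k)))"
    using hoffman[OF finK, of av] by blast
  have feas: "(\<forall>k\<in>K. av k \<bullet> z \<le> cv u k) \<longleftrightarrow> (z \<in> P \<and> B *v z = u)" for z u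
  proof -
    have "(\<forall>k\<in>Inl ` F. av k \<bullet> z \<le> cv u k) \<longleftrightarrow> (\<forall>h\<in>F. fst (hab h) \<bullet> z \<le> snd (hab h))"
      by (simp add: av_def cv_def)
    also have "\<dots> \<longleftrightarrow> (\<forall>h\<in>F. z \<in> h)" by (meson hab)
    also have "\<dots> \<longleftrightarrow> z \<in> P" unfolding F(2) by blast
    finally have A1: "(\<forall>k\<in>Inl ` F. av k \<bullet> z \<le> cv u k) \<longleftrightarrow> z \<in> P" .
    have "(\<forall>k\<in>Inr ` (UNIV :: ('n \<times> bool) set). av k \<bullet> z \<le> cv u k) \<longleftrightarrow>
          (\<forall>j. B $ j \<bullet> z \<le> u $ j \<and> - (B $ j) \<bullet> z \<le> - (u $ j))"
    proof
      assume "\<forall>k\<in>Inr ` (UNIV :: ('n \<times> bool) set). av k \<bullet> z \<le> cv u k"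
      then have Hjs: "av (Inr (j, s)) \<bullet> z \<le> cv u (Inr (j, s))" for j s by blast
      show "\<forall>j. B $ j \<bullet> z \<le> u $ j \<and> - (B $ j) \<bullet> z \<le> - (u $ j)"
      proof
        fix j
        show "B $ j \<bullet> z \<le> u $ j \<and> - (B $ j) \<bullet> z \<le> - (u $ j)"
          using Hjs[of j True] Hjs[of j False] by (simp add: av_def cv_def)
      qed
    next
      assume H: "\<forall>j. B $ j \<bullet> z \<le> u $ j \<and> - (B $ j) \<bullet> z \<le> - (u $ j)"
      show "\<forall>k\<in>Inr ` (UNIV :: ('n \<times> bool) set). av k \<bullet> z \<le> cv u k"
      proof
        fix k :: "(real^'m) set + ('n \<times> bool)"
        assume "k \<in> Inr ` (UNIV :: ('n \<times> bool) set)"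
        then obtain j s where k: "k = Inr (j, s)" by auto
        have "B $ j \<bullet> z \<le> u $ j" "- (B $ j) \<bullet> z \<le> - (u $ j)" using H by blast+
        then show "av k \<bullet> z \<le> cv u k" by (cases s) (simp_all add: k av_def cv_def)
      qed
    qed
    also have "\<dots> \<longleftrightarrow> (\<forall>j. B $ j \<bullet> z = u $ j)" by (simp add: inner_minus_left order_eq_iff)
    also have "\<dots> \<longleftrightarrow> B *v z = u" by (simp add: vec_eq_iff matrix_vector_mul_component)
    finally have R: "(\<forall>k\<in>Inr ` (UNIV :: ('n \<times> bool) set). av k \<bullet> z \<le> cv u k) \<longleftrightarrow> B *v z = u" .
    show ?thesis by (simp only: K_def ball_Un A1 R)
  qed
  have resid: "(\<Sum>k\<in>K. max 0 (av k \<bullet> x - cv u k)) \<le> real (card K) * norm (B *v x - u)"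
    if x: "x \<in> P" for x u
  proof -
    have "(\<Sum>k\<in>K. max 0 (av k \<bullet> x - cv u k)) \<le> (\<Sum>k\<in>K. norm (B *v x - u))"
    proof (rule sum_mono)
      fix k assume k: "k \<in> K"
      show "max 0 (av k \<bullet> x - cv u k) \<le> norm (B *v x - u)"
      proof (cases k)
        case (Inl h)
        then have "h \<in> F" using k K_def by auto
        then have "av k \<bullet> x \<le> cv u k" using x hab[of h x] F(2) Inl by (auto simp: av_def cv_def)
        then show ?thesis by simp
      next
        case (Inr js)
        obtain j s where js: "js = (j, s)" by force
        have comp: "B $ j \<bullet> x - u $ j = (B *v x - u) $ j" by (simp add: matrix_vector_mul_component)
        have "\<bar>(B *v x - u) $ j\<bar> \<le> norm (B *v x - u)" by (rule component_le_norm_cart)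
        then show ?thesis using comp by (cases s) (auto simp: Inr js av_def cv_def inner_minus_left)
      qed
    qed
    then show ?thesis by simp
  qed
  define \<theta>' where "\<theta>' = \<theta> * (real (card K) + 1)"
  have \<theta>'0: "\<theta>' > 0" unfolding \<theta>'_def using \<theta>0 by simp
  have hoff: "\<exists>z. z \<in> P \<and> B *v z = u \<and> norm (x - z) \<le> \<theta>' * norm (B *v x - u)"
    if "x \<in> P" "z0 \<in> P" "B *v z0 = u" for x z0 u
  proof -
    have "\<forall>k\<in>K. av k \<bullet> z0 \<le> cv u k" using feas[of z0 u] that(2,3) by simp
    then have "{z. \<forall>k\<in>K. av k \<bullet> z \<le> cv u k} \<noteq> {}" by blast
    then obtain z where z: "\<forall>k\<in>K. av k \<bullet> z \<le> cv u k"
      "norm (x - z) \<le> \<theta> * (\<Sum>k\<in>K. max 0 (av k \<bullet> x - cv u k))"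
      using \<theta>H by blast
    have "\<theta> * (\<Sum>k\<in>K. max 0 (av k \<bullet> x - cv u k)) \<le> \<theta> * (real (card K) * norm (B *v x - u))"
      using resid[OF that(1)] \<theta>0 by (simp add: mult_left_mono)
    also have "\<dots> \<le> \<theta> * ((real (card K) + 1) * norm (B *v x - u))"
      using \<theta>0 by (intro mult_left_mono mult_right_mono) auto
    also have "\<dots> = \<theta>' * norm (B *v x - u)" unfolding \<theta>'_def by simp
    finally have "norm (x - z) \<le> \<theta>' * norm (B *v x - u)" using z(2) by linarith
    moreover have "z \<in> P \<and> B *v z = u" using feas[of z u] z(1) by simp
    ultimately show ?thesis by blast
  qed
  have main: "\<forall>lam>0. \<forall>y.
               convex_on UNIV (\<lambda>v. h lam y (transpose A *v v))
             \<and> lipschitz_smooth (\<lambda>v. h lam y (transpose A *v v))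
                   (lam * onorm (\<lambda>x. (transpose A ** A) *v x))
             \<and> minimizers (\<Psi> lam y) \<noteq> {}
             \<and> quadratic_growth (\<Psi> lam y) (lam / \<theta>'\<^sup>2)"
  proof (intro allI impI)
    fix lam :: real and y :: "real^'n"
    assume lam: "lam > 0"
    define f where "f = (\<lambda>v. h lam y (transpose A *v v))"
    have fB: "f v = lam/2 * ((B *v v) \<bullet> (B *v v)) - (B *v v) \<bullet> y" for v
    proof -
      define u where "u = B *v v"
      have "(norm (lam *\<^sub>R u - y))\<^sup>2 = (lam *\<^sub>R u - y) \<bullet> (lam *\<^sub>R u - y)"
        by (rule power2_norm_eq_inner)
      also have "\<dots> = lam\<^sup>2 * (u \<bullet> u) - 2 * lam * (u \<bullet> y) + y \<bullet> y"
        by (simp add: inner_diff_left inner_diff_right inner_commute power2_eq_square algebra_simps)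
      also have "y \<bullet> y = (norm y)\<^sup>2" by (rule power2_norm_eq_inner[symmetric])
      finally have "(norm (lam *\<^sub>R u - y))\<^sup>2 = lam\<^sup>2 * (u \<bullet> u) - 2 * lam * (u \<bullet> y) + (norm y)\<^sup>2" .
      then have "h lam y u = lam/2 * (u \<bullet> u) - u \<bullet> y"
        unfolding h_def using lam by (simp add: field_simps power2_eq_square)
      then show ?thesis unfolding f_def u_def B_def by simp
    qed
    define G where "G w = (lam *\<^sub>R (B *v w) - y) v* B" for w
    have ex: "f (w + d) = f w + G w \<bullet> d + lam/2 * ((B *v d) \<bullet> (B *v d))" for w d
      unfolding fB G_def by (rule quad_expand)
    have Bdd: "(B *v d) \<bullet> (B *v d) \<ge> 0" for d by simp
    have grad: "f x \<ge> f w + G w \<bullet> (x - w)" for x w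
      using ex[of w "x - w"] Bdd[of "x - w"] lam by (simp add: mult_nonneg_nonneg)
    have cvx: "convex_on UNIV f"
    proof (rule convex_onI)
      fix t :: real and x1 x2 :: "real^'m" assume t: "0 < t" "t < 1"
      define z where "z = (1 - t) *\<^sub>R x1 + t *\<^sub>R x2"
      have "(1 - t) * f x1 + t * f x2 \<ge> (1 - t) * (f z + G z \<bullet> (x1 - z)) + t * (f z + G z \<bullet> (x2 - z))"
        using grad[of z x1] grad[of z x2] t by (intro add_mono mult_left_mono) auto
      also have "(1 - t) * (f z + G z \<bullet> (x1 - z)) + t * (f z + G z \<bullet> (x2 - z)) =
          f z + G z \<bullet> ((1 - t) *\<^sub>R (x1 - z) + t *\<^sub>R (x2 - z))"
        by (simp add: inner_add_right inner_diff_right algebra_simps)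
      also have "(1 - t) *\<^sub>R (x1 - z) + t *\<^sub>R (x2 - z) = 0"
        unfolding z_def by (simp add: algebra_simps)
      finally show "f ((1 - t) *\<^sub>R x1 + t *\<^sub>R x2) \<le> (1 - t) * f x1 + t * f x2"
        unfolding z_def by simp
    qed simp
    have smooth: "lipschitz_smooth f (lam * onorm (\<lambda>x. (transpose A ** A) *v x))"
      unfolding lipschitz_smooth_def
    proof (intro exI[of _ G] conjI allI)
      fix w
      have fEq: "f = (\<lambda>v. lam/2 * ((B *v v) \<bullet> (B *v v)) - (B *v v) \<bullet> y)" using fB by (intro ext) simp
      show "(f has_derivative (\<lambda>h. G w \<bullet> h)) (at w)" unfolding fEq G_def by (rule quad_deriv)
    next
      fix u w
      have "f u - f w - G w \<bullet> (u - w) = lam/2 * ((B *v (u - w)) \<bullet> (B *v (u - w)))"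
        using ex[of w "u - w"] by simp
      also have "\<dots> \<le> lam/2 * (onorm (\<lambda>x. (transpose A ** A) *v x) * (norm (u - w))\<^sup>2)"
        using opbound[of A "u - w"] lam unfolding B_def by (intro mult_left_mono) auto
      finally show "f u - f w - G w \<bullet> (u - w) \<le> lam * onorm (\<lambda>x. (transpose A ** A) *v x) / 2 * (norm (u - w))\<^sup>2"
        by simp
    qed
    have Psi: "\<Psi> lam y v = (if v \<in> P then ereal (f v) else \<infinity>)" for v
      unfolding \<Psi>_def fc f_def by simp
    have contf: "continuous_on P f"
    proof -
      have "f = (\<lambda>v. lam/2 * ((B *v v) \<bullet> (B *v v)) - (B *v v) \<bullet> y)" using fB by (intro ext) simp
      then show ?thesis by (simp add: continuous_intros)
    qed
    obtain v0 where v0: "v0 \<in> P" "\<And>v. v \<in> P \<Longrightarrow> f v0 \<le> f v"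
      using continuous_attains_inf[OF cpP neP contf] by blast
    have opt: "G v0 \<bullet> (v - v0) \<ge> 0" if v: "v \<in> P" for v
    proof (rule ccontr)
      assume "\<not> G v0 \<bullet> (v - v0) \<ge> 0"
      then have eps: "- (G v0 \<bullet> (v - v0)) > 0" by simp
      define \<epsilon> where "\<epsilon> = - (G v0 \<bullet> (v - v0))"
      define Q where "Q = lam/2 * ((B *v (v - v0)) \<bullet> (B *v (v - v0)))"
      have Q0: "Q \<ge> 0" unfolding Q_def using lam by simp
      have e0: "\<epsilon> > 0" using eps \<epsilon>_def by simp
      define t where "t = \<epsilon> / (2 * (Q + \<epsilon>))"
      have t0: "t > 0" unfolding t_def using e0 Q0 by simp
      have t1: "t \<le> 1" unfolding t_def using e0 Q0 by (simp add: field_simps)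
      have tQ: "t * Q \<le> \<epsilon> / 2" unfolding t_def using e0 Q0 by (simp add: field_simps)
      have inP: "v0 + t *\<^sub>R (v - v0) \<in> P"
      proof -
        have "v0 + t *\<^sub>R (v - v0) = (1 - t) *\<^sub>R v0 + t *\<^sub>R v" by (simp add: algebra_simps)
        then show ?thesis using convexD_alt[OF cvP v0(1) v, of t] t0 t1 by simp
      qed
      have "f (v0 + t *\<^sub>R (v - v0)) = f v0 + t * (G v0 \<bullet> (v - v0)) + t * (t * Q)"
        unfolding ex Q_def by (simp add: matrix_vector_mult_scaleR algebra_simps)
      also have "\<dots> \<le> f v0 - t * \<epsilon> + t * (\<epsilon> / 2)"
      proof -
        have Geq: "G v0 \<bullet> (v - v0) = - \<epsilon>" unfolding \<epsilon>_def by simp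
        have tt: "t * (t * Q) \<le> t * (\<epsilon> / 2)" using tQ t0 by (intro mult_left_mono) auto
        have "t * - \<epsilon> = - (t * \<epsilon>)" by simp
        then show ?thesis unfolding Geq using tt by linarith
      qed
      also have "\<dots> < f v0" using t0 e0 by simp
      finally show False using v0(2)[OF inP] by simp
    qed
    have growth: "f v - f v0 \<ge> lam/2 * (norm (B *v v - B *v v0))\<^sup>2" if v: "v \<in> P" for v
    proof -
      have "f v = f v0 + G v0 \<bullet> (v - v0) + lam/2 * ((B *v (v - v0)) \<bullet> (B *v (v - v0)))"
        using ex[of v0 "v - v0"] by simp
      then show ?thesis using opt[OF v]
        by (simp add: power2_norm_eq_inner matrix_vector_mult_diff_distrib)
    qed
    define S where "S = {v \<in> P. B *v v = B *v v0}"
    have fS: "f v = f v0" if "B *v v = B *v v0" for v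
      using that unfolding fB by simp
    have minS: "minimizers (\<Psi> lam y) = S"
    proof
      show "S \<subseteq> minimizers (\<Psi> lam y)"
      proof
        fix v assume "v \<in> S"
        then have v: "v \<in> P" "B *v v = B *v v0" unfolding S_def by auto
        show "v \<in> minimizers (\<Psi> lam y)" unfolding minimizers_def
        proof (intro CollectI allI)
          fix u
          show "\<Psi> lam y v \<le> \<Psi> lam y u"
            using v fS[OF v(2)] v0(2)[of u] unfolding Psi by auto
        qed
      qed
      show "minimizers (\<Psi> lam y) \<subseteq> S"
      proof
        fix s assume "s \<in> minimizers (\<Psi> lam y)"
        then have "\<Psi> lam y s \<le> \<Psi> lam y v0" unfolding minimizers_def by blast
        then have s: "s \<in> P" "f s \<le> f v0" using v0(1) unfolding Psi by (auto split: if_splits)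
        have "lam/2 * (norm (B *v s - B *v v0))\<^sup>2 \<le> 0" using growth[OF s(1)] s(2) by simp
        then have "norm (B *v s - B *v v0) = 0" using lam
          by (simp add: mult_le_0_iff)
        then show "s \<in> S" unfolding S_def using s(1) by simp
      qed
    qed
    have v0S: "v0 \<in> S" unfolding S_def using v0(1) by simp
    have qg: "quadratic_growth (\<Psi> lam y) (lam / \<theta>'\<^sup>2)"
      unfolding quadratic_growth_def minS
    proof (intro conjI ballI allI)
      show "S \<noteq> {}" using v0S by blast
      fix s assume s: "s \<in> S"
      then have sP: "s \<in> P" and sB: "B *v s = B *v v0" unfolding S_def by auto
      have fs: "f s = f v0" by (rule fS[OF sB])
      show "\<bar>\<Psi> lam y s\<bar> \<noteq> \<infinity>" unfolding Psi using sP by simp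
      fix v
      show "\<Psi> lam y s + ereal (lam / \<theta>'\<^sup>2 / 2 * (infdist v S)\<^sup>2) \<le> \<Psi> lam y v"
      proof (cases "v \<in> P")
        case False
        then show ?thesis unfolding Psi by simp
      next
        case True
        obtain z where z: "z \<in> P" "B *v z = B *v v0" "norm (v - z) \<le> \<theta>' * norm (B *v v - B *v v0)"
          using hoff[OF True v0(1) refl] by blast
        have zS: "z \<in> S" unfolding S_def using z by simp
        have "infdist v S \<le> dist v z" by (rule infdist_le[OF zS])
        also have "\<dots> \<le> \<theta>' * norm (B *v v - B *v v0)" using z(3) by (simp add: dist_norm)
        finally have "(infdist v S)\<^sup>2 \<le> (\<theta>' * norm (B *v v - B *v v0))\<^sup>2"
          by (rule power_mono) (simp add: infdist_nonneg)
        then have "lam / \<theta>'\<^sup>2 / 2 * (infdist v S)\<^sup>2 \<le> lam / \<theta>'\<^sup>2 / 2 * (\<theta>' * norm (B *v v - B *v v0))\<^sup>2"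
          using lam by (intro mult_left_mono) auto
        also have "\<dots> = lam/2 * (norm (B *v v - B *v v0))\<^sup>2"
          using \<theta>'0 by (simp add: power_mult_distrib field_simps)
        also have "\<dots> \<le> f v - f v0" by (rule growth[OF True])
        finally have "f s + lam / \<theta>'\<^sup>2 / 2 * (infdist v S)\<^sup>2 \<le> f v" using fs by simp
        then show ?thesis unfolding Psi using True sP by simp
      qed
    qed
    show "convex_on UNIV (\<lambda>v. h lam y (transpose A *v v))
             \<and> lipschitz_smooth (\<lambda>v. h lam y (transpose A *v v))
                   (lam * onorm (\<lambda>x. (transpose A ** A) *v x))
             \<and> minimizers (\<Psi> lam y) \<noteq> {}
             \<and> quadratic_growth (\<Psi> lam y) (lam / \<theta>'\<^sup>2)"
    proof -
      have mne: "minimizers (\<Psi> lam y) \<noteq> {}" using minS v0S by blast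
      show ?thesis unfolding f_def[symmetric] by (intro conjI cvx smooth mne qg)
    qed
  qed
  have last: "\<forall>lmin lam. 0 < lmin \<and> lmin \<le> lam \<longrightarrow> lam / \<theta>'\<^sup>2 \<ge> lmin / \<theta>'\<^sup>2"
    by (auto intro: divide_right_mono)
  show ?thesis
    unfolding Kw_def[symmetric] by (intro conjI exI[of _ \<theta>'] lip bnd main last \<theta>'0)
qed

end
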